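(* Let $r\ge 3$ and let $\mathcal H=(V,E)$ be an $r$-uniform bi-hypergraph with $|V|=2r$. If $|E|<\binom{2r}{r}/2$, then $\mathcal H$ is colorable.
   Context: A bi-hypergraph $\mathcal H=(V,E)$ consists of a finite vertex set $V$ and a set $E$ of subsets of $V$, called edges, with no edge contained in another. It is $r$-uniform if every edge has exactly $r$ elements. A mapping $f:V\to\mathbb N$ is a proper coloring of $\mathcal H$ if $1<|f(e)|<|e|$ for every $e\in E$, where $f(e)=\{f(v):v\in e\}$. $\mathcal H$ is colorable if it has a proper coloring. *)

theory Defs
  imports Main
begin

definition bi_hypergraph :: "'a set \<Rightarrow> 'a set set \<Rightarrow> bool" where
  "bi_hypergraph V E \<longleftrightarrow> finite V \<and> (\<forall>e\<in>E. e \<subseteq> V) \<and>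
     (\<forall>e\<in>E. \<forall>e'\<in>E. e \<subseteq> e' \<longrightarrow> e = e')"

definition uniform :: "nat \<Rightarrow> 'a set set \<Rightarrow> bool" where
  "uniform r E \<longleftrightarrow> (\<forall>e\<in>E. card e = r)"

definition proper_coloring :: "'a set set \<Rightarrow> ('a \<Rightarrow> nat) \<Rightarrow> bool" where
  "proper_coloring E f \<longleftrightarrow> (\<forall>e\<in>E. 1 < card (f ` e) \<and> card (f ` e) < card e)"

definition colorable :: "'a set \<Rightarrow> 'a set set \<Rightarrow> bool" where
  "colorable V E \<longleftrightarrow> (\<exists>f :: 'a \<Rightarrow> nat. proper_coloring E f)"

end

theory Submission
  imports Defs
begin

theorem mainTheorem8:
  fixes V :: "'a set" and E :: "'a set set" and r :: nat
  assumes "r \<ge> 3"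
    and "bi_hypergraph V E"
    and "uniform r E"
    and "card V = 2 * r"
    and "2 * card E < (2 * r) choose r"
  shows "colorable V E"
proof -
  have finV: "finite V" and sub: "\<forall>e\<in>E. e \<subseteq> V" using assms(2) unfolding bi_hypergraph_def by auto
  have cE: "\<forall>e\<in>E. card e = r" using assms(3) unfolding uniform_def by auto
  have finE: "finite E" using sub finV by (meson Pow_iff finite_Pow_iff finite_subset subsetI)
  define S where "S = {A. A \<subseteq> V \<and> card A = r}"
  have cS: "card S = (2 * r) choose r" unfolding S_def using n_subsets[OF finV, of r] assms(4) by simp
  have "\<exists>A\<in>S. A \<notin> E \<and> V - A \<notin> E"
  proof (rule ccontr)
    assume "\<not> ?thesis"
    then have "S \<subseteq> E \<union> (\<lambda>e. V - e) ` E"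
    proof (intro subsetI)
      fix A assume h: "\<not> (\<exists>A\<in>S. A \<notin> E \<and> V - A \<notin> E)" and A: "A \<in> S"
      then have "A \<in> E \<or> V - A \<in> E" by auto
      moreover have "A = V - (V - A)" using A unfolding S_def by auto
      ultimately show "A \<in> E \<union> (\<lambda>e. V - e) ` E" by blast
    qed
    then have "card S \<le> card (E \<union> (\<lambda>e. V - e) ` E)" using finE by (intro card_mono) auto
    also have "\<dots> \<le> card E + card ((\<lambda>e. V - e) ` E)" by (rule card_Un_le)
    also have "\<dots> \<le> card E + card E" using card_image_le[OF finE] by simp
    finally show False using cS assms(5) by simp
  qed
  then obtain A where A: "A \<subseteq> V" "card A = r" "A \<notin> E" "V - A \<notin> E" unfolding S_def by auto
  have cVA: "card (V - A) = r" using A finV assms(4) by (simp add: card_Diff_subset finite_subset)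
  define f where "f = (\<lambda>v. if v \<in> A then (0::nat) else 1)"
  have "proper_coloring E f"
    unfolding proper_coloring_def
  proof
    fix e assume e: "e \<in> E"
    have fe: "finite e" using e sub finV finite_subset by blast
    have ce: "card e = r" using e cE by auto
    have "\<not> e \<subseteq> A"
    proof
      assume "e \<subseteq> A"
      then have "e = A" using card_subset_eq[of A e] A finV fe ce finite_subset by metis
      then show False using e A by simp
    qed
    then obtain x where x: "x \<in> e" "x \<notin> A" by auto
    have "\<not> e \<subseteq> V - A"
    proof
      assume "e \<subseteq> V - A"
      then have "e = V - A" using card_subset_eq[of "V - A" e] cVA finV fe ce by auto
      then show False using e A by simp
    qed
    then obtain y where y: "y \<in> e" "y \<in> A" using e sub by auto
    have "f ` e = {0, 1}" using x y unfolding f_def by auto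
    then show "1 < card (f ` e) \<and> card (f ` e) < card e" using ce assms(1) by simp
  qed
  then show ?thesis unfolding colorable_def by blast
qed

end
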